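(* Let $(M,\varphi,\xi,\eta,g)$ be a Sasaki-like almost contact B-metric manifold which is Einstein-like and admits a Ricci-like soliton with potential $\xi$. Then its Ricci tensor $\rho$ is $\eta$-parallel, i.e. $(\nabla_x\rho)(\varphi y,\varphi z)=0$ for all vector fields $x,y,z$, and parallel along $\xi$, i.e. $\nabla_\xi\rho=0$.
   Context: An almost contact B-metric manifold $(M,\varphi,\xi,\eta,g)$ is a $(2n+1)$-dimensional manifold with a $(1,1)$-tensor $\varphi$, a vector field $\xi$, a 1-form $\eta$ and a pseudo-Riemannian metric $g$ of signature $(n+1,n)$ such that $\varphi\xi=0$, $\varphi^2=-\mathrm{Id}+\eta\otimes\xi$, $\eta\circ\varphi=0$, $\eta(\xi)=1$, and $g(\varphi x,\varphi y)=-g(x,y)+\eta(x)\eta(y)$. The associated B-metric is $\tilde g(x,y)=g(x,\varphi y)+\eta(x)\eta(y)$. With $\nabla$ the Levi-Civita connection of $g$, the manifold is Sasaki-like if $(\nabla_x\varphi)y=-g(x,y)\xi-\eta(y)x+2\eta(x)\eta(y)\xi$. Let $\rho$ be the Ricci tensor of $g$. The manifold is Einstein-like if $\rho=a g+b\tilde g+c\,\eta\otimes\eta$ for some constants $a,b,c$. It admits a Ricci-like soliton with potential vector field $v$ and constants $(\lambda,\mu,\nu)$ if $\frac12\mathcal L_v g+\rho+\lambda g+\mu\tilde g+\nu\,\eta\otimes\eta=0$, where $\mathcal L$ is the Lie derivative. *)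

theory Defs
  imports "HOL-Analysis.Analysis"
begin

text \<open>Local (coordinate) tensor calculus on an open domain U of real^'m.
  A vector field is a map real^'m => real^'m (components), a (1,1)-tensor field
  a matrix field, a 1-form a covector field (components), the metric a symmetric
  matrix field.\<close>

definition partial :: "'m::finite \<Rightarrow> (real^'m \<Rightarrow> real) \<Rightarrow> real^'m \<Rightarrow> real" where
  "partial i f p = deriv (\<lambda>t. f (p + t *\<^sub>R axis i 1)) 0"

fun iter_partial :: "'m::finite list \<Rightarrow> (real^'m \<Rightarrow> real) \<Rightarrow> real^'m \<Rightarrow> real" where
  "iter_partial [] f = f"
| "iter_partial (i # is) f = partial i (iter_partial is f)"

definition smooth_on :: "(real^'m::finite) set \<Rightarrow> (real^'m \<Rightarrow> real) \<Rightarrow> bool" where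
  "smooth_on U f \<longleftrightarrow> (\<forall>is. iter_partial is f differentiable_on U)"

definition bil :: "real^'m^'m \<Rightarrow> real^'m \<Rightarrow> real^'m \<Rightarrow> real" where
  "bil G x y = x \<bullet> (G *v y)"

definition has_signature :: "real^'m^'m::finite \<Rightarrow> nat \<Rightarrow> nat \<Rightarrow> bool" where
  "has_signature G p q \<longleftrightarrow>
     (\<exists>e :: 'm \<Rightarrow> real^'m. inj e \<and> independent (range e) \<and>
        (\<forall>a b. a \<noteq> b \<longrightarrow> bil G (e a) (e b) = 0) \<and>
        (\<forall>a. bil G (e a) (e a) = 1 \<or> bil G (e a) (e a) = -1) \<and>
        card {a. bil G (e a) (e a) = 1} = p \<and>
        card {a. bil G (e a) (e a) = -1} = q)"

definition christoffel :: "(real^'m \<Rightarrow> real^'m^'m) \<Rightarrow> real^'m \<Rightarrow> 'm::finite \<Rightarrow> 'm \<Rightarrow> 'm \<Rightarrow> real" where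
  "christoffel g p k i j =
     (1/2) * (\<Sum>l\<in>UNIV. matrix_inv (g p) $ k $ l *
        (partial i (\<lambda>q. g q $ j $ l) p + partial j (\<lambda>q. g q $ i $ l) p
         - partial l (\<lambda>q. g q $ i $ j) p))"

text \<open>Curvature: R(d_i,d_j)d_k = sum_l R^l_{ijk} d_l with
  R(X,Y) = [nabla_X, nabla_Y] - nabla_[X,Y].\<close>
definition riemann :: "(real^'m \<Rightarrow> real^'m^'m) \<Rightarrow> real^'m \<Rightarrow> 'm::finite \<Rightarrow> 'm \<Rightarrow> 'm \<Rightarrow> 'm \<Rightarrow> real" where
  "riemann g p l i j k =
     partial i (\<lambda>q. christoffel g q l j k) p - partial j (\<lambda>q. christoffel g q l i k) p
     + (\<Sum>m\<in>UNIV. christoffel g p l i m * christoffel g p m j k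
                 - christoffel g p l j m * christoffel g p m i k)"

definition ricci :: "(real^'m \<Rightarrow> real^'m^'m) \<Rightarrow> real^'m \<Rightarrow> 'm::finite \<Rightarrow> 'm \<Rightarrow> real" where
  "ricci g p j k = (\<Sum>i\<in>UNIV. riemann g p i i j k)"

definition nabla_ricci :: "(real^'m \<Rightarrow> real^'m^'m) \<Rightarrow> real^'m \<Rightarrow> 'm::finite \<Rightarrow> 'm \<Rightarrow> 'm \<Rightarrow> real" where
  "nabla_ricci g p i j k =
     partial i (\<lambda>q. ricci g q j k) p
     - (\<Sum>l\<in>UNIV. christoffel g p l i j * ricci g p l k)
     - (\<Sum>l\<in>UNIV. christoffel g p l i k * ricci g p j l)"

text \<open>k-th component of (nabla_{d_i} phi) d_j, with (phi y)^k = sum_j phi$k$j y_j.\<close>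
definition nabla_phi :: "(real^'m \<Rightarrow> real^'m^'m) \<Rightarrow> (real^'m \<Rightarrow> real^'m^'m) \<Rightarrow> real^'m
    \<Rightarrow> 'm::finite \<Rightarrow> 'm \<Rightarrow> 'm \<Rightarrow> real" where
  "nabla_phi g phi p i k j =
     partial i (\<lambda>q. phi q $ k $ j) p
     + (\<Sum>l\<in>UNIV. christoffel g p k i l * phi p $ l $ j)
     - (\<Sum>l\<in>UNIV. christoffel g p l i j * phi p $ k $ l)"

definition lie_g :: "(real^'m \<Rightarrow> real^'m^'m) \<Rightarrow> (real^'m \<Rightarrow> real^'m) \<Rightarrow> real^'m
    \<Rightarrow> 'm::finite \<Rightarrow> 'm \<Rightarrow> real" where
  "lie_g g v p i j =
     (\<Sum>k\<in>UNIV. v p $ k * partial k (\<lambda>q. g q $ i $ j) p)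
     + (\<Sum>k\<in>UNIV. g p $ k $ j * partial i (\<lambda>q. v q $ k) p)
     + (\<Sum>k\<in>UNIV. g p $ i $ k * partial j (\<lambda>q. v q $ k) p)"

definition gtilde :: "(real^'m \<Rightarrow> real^'m^'m) \<Rightarrow> (real^'m \<Rightarrow> real^'m^'m) \<Rightarrow> (real^'m \<Rightarrow> real^'m)
    \<Rightarrow> real^'m \<Rightarrow> 'm::finite \<Rightarrow> 'm \<Rightarrow> real" where
  "gtilde g phi eta p i j = (\<Sum>l\<in>UNIV. g p $ i $ l * phi p $ l $ j) + eta p $ i * eta p $ j"

definition almost_contact_B_metric ::
  "(real^'m::finite) set \<Rightarrow> nat \<Rightarrow> (real^'m \<Rightarrow> real^'m^'m) \<Rightarrow> (real^'m \<Rightarrow> real^'m)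
   \<Rightarrow> (real^'m \<Rightarrow> real^'m) \<Rightarrow> (real^'m \<Rightarrow> real^'m^'m) \<Rightarrow> bool" where
  "almost_contact_B_metric U n phi xi eta g \<longleftrightarrow>
     open U \<and> CARD('m) = 2 * n + 1 \<and>
     (\<forall>i j. smooth_on U (\<lambda>q. phi q $ i $ j)) \<and>
     (\<forall>i. smooth_on U (\<lambda>q. xi q $ i)) \<and>
     (\<forall>i. smooth_on U (\<lambda>q. eta q $ i)) \<and>
     (\<forall>i j. smooth_on U (\<lambda>q. g q $ i $ j)) \<and>
     (\<forall>p\<in>U.
        transpose (g p) = g p \<and> has_signature (g p) (n + 1) n \<and>
        phi p *v xi p = 0 \<and>
        (\<forall>x. phi p *v (phi p *v x) = - x + (eta p \<bullet> x) *\<^sub>R xi p) \<and>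
        (\<forall>x. eta p \<bullet> (phi p *v x) = 0) \<and>
        eta p \<bullet> xi p = 1 \<and>
        (\<forall>x y. bil (g p) (phi p *v x) (phi p *v y) = - bil (g p) x y + (eta p \<bullet> x) * (eta p \<bullet> y)))"

definition sasaki_like ::
  "(real^'m::finite) set \<Rightarrow> (real^'m \<Rightarrow> real^'m^'m) \<Rightarrow> (real^'m \<Rightarrow> real^'m)
   \<Rightarrow> (real^'m \<Rightarrow> real^'m) \<Rightarrow> (real^'m \<Rightarrow> real^'m^'m) \<Rightarrow> bool" where
  "sasaki_like U phi xi eta g \<longleftrightarrow>
     (\<forall>p\<in>U. \<forall>i j k. nabla_phi g phi p i k j =
        - g p $ i $ j * xi p $ k - eta p $ j * (if k = i then 1 else 0)
        + 2 * eta p $ i * eta p $ j * xi p $ k)"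

definition einstein_like ::
  "(real^'m::finite) set \<Rightarrow> (real^'m \<Rightarrow> real^'m^'m) \<Rightarrow> (real^'m \<Rightarrow> real^'m)
   \<Rightarrow> (real^'m \<Rightarrow> real^'m^'m) \<Rightarrow> bool" where
  "einstein_like U phi eta g \<longleftrightarrow>
     (\<exists>a b c :: real. \<forall>p\<in>U. \<forall>i j.
        ricci g p i j = a * g p $ i $ j + b * gtilde g phi eta p i j + c * eta p $ i * eta p $ j)"

definition ricci_like_soliton ::
  "(real^'m::finite) set \<Rightarrow> (real^'m \<Rightarrow> real^'m^'m) \<Rightarrow> (real^'m \<Rightarrow> real^'m)
   \<Rightarrow> (real^'m \<Rightarrow> real^'m^'m) \<Rightarrow> (real^'m \<Rightarrow> real^'m) \<Rightarrow> bool" where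
  "ricci_like_soliton U phi eta g v \<longleftrightarrow>
     (\<exists>lam mu nu :: real. \<forall>p\<in>U. \<forall>i j.
        (1/2) * lie_g g v p i j + ricci g p i j + lam * g p $ i $ j
        + mu * gtilde g phi eta p i j + nu * eta p $ i * eta p $ j = 0)"

end

theory Submission
  imports Defs
begin


lemma partial_has:
  fixes f :: "real^'m::finite \<Rightarrow> real"
  assumes "f differentiable at p"
  shows "((\<lambda>t. f (p + t *\<^sub>R axis i 1)) has_real_derivative partial i f p) (at 0)"
proof -
  have "(f \<circ> (\<lambda>t. p + t *\<^sub>R axis i 1)) differentiable at 0"
    by (rule differentiable_chain_at) (auto intro!: derivative_intros assms)
  then have "(\<lambda>t. f (p + t *\<^sub>R axis i 1)) differentiable at 0" by (simp add: o_def)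
  then show ?thesis unfolding partial_def
    using DERIV_deriv_iff_real_differentiable by blast
qed

lemma partial_add:
  fixes f h :: "real^'m::finite \<Rightarrow> real"
  assumes "f differentiable at p" "h differentiable at p"
  shows "partial i (\<lambda>q. f q + h q) p = partial i f p + partial i h p"
  unfolding partial_def[of i "\<lambda>q. f q + h q"]
  by (rule DERIV_imp_deriv, rule DERIV_add, (rule partial_has, fact)+)

lemma partial_diff:
  fixes f h :: "real^'m::finite \<Rightarrow> real"
  assumes "f differentiable at p" "h differentiable at p"
  shows "partial i (\<lambda>q. f q - h q) p = partial i f p - partial i h p"
  unfolding partial_def[of i "\<lambda>q. f q - h q"]
  by (rule DERIV_imp_deriv, rule DERIV_diff, (rule partial_has, fact)+)

lemma partial_mult:
  fixes f h :: "real^'m::finite \<Rightarrow> real"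
  assumes "f differentiable at p" "h differentiable at p"
  shows "partial i (\<lambda>q. f q * h q) p = partial i f p * h p + f p * partial i h p"
proof -
  have "((\<lambda>t. f (p + t *\<^sub>R axis i 1) * h (p + t *\<^sub>R axis i 1)) has_real_derivative
     partial i f p * h (p + 0 *\<^sub>R axis i 1) + partial i h p * f (p + 0 *\<^sub>R axis i 1)) (at 0)"
    by (rule DERIV_mult, (rule partial_has, fact)+)
  then have "partial i (\<lambda>q. f q * h q) p = partial i f p * h (p + 0 *\<^sub>R axis i 1) + partial i h p * f (p + 0 *\<^sub>R axis i 1)"
    unfolding partial_def[of i "\<lambda>q. f q * h q"] by (rule DERIV_imp_deriv)
  then show ?thesis by simp
qed

lemma partial_cmult:
  fixes f :: "real^'m::finite \<Rightarrow> real"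
  assumes "f differentiable at p"
  shows "partial i (\<lambda>q. c * f q) p = c * partial i f p"
  unfolding partial_def[of i "\<lambda>q. c * f q"]
  by (rule DERIV_imp_deriv, rule DERIV_cmult, rule partial_has, fact)

lemma partial_sum:
  fixes f :: "'a \<Rightarrow> real^'m::finite \<Rightarrow> real"
  assumes "finite S" "\<And>l. l \<in> S \<Longrightarrow> f l differentiable at p"
  shows "partial i (\<lambda>q. \<Sum>l\<in>S. f l q) p = (\<Sum>l\<in>S. partial i (f l) p)"
  unfolding partial_def[of i "\<lambda>q. \<Sum>l\<in>S. f l q"]
  by (rule DERIV_imp_deriv, rule DERIV_sum, rule partial_has, rule assms(2))

lemma partial_local:
  fixes f h :: "real^'m::finite \<Rightarrow> real"
  assumes "open U" "p \<in> U" "\<And>q. q \<in> U \<Longrightarrow> f q = h q"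
  shows "partial i f p = partial i h p"
  unfolding partial_def
proof (rule deriv_cong_ev[OF _ refl])
  have "open ((\<lambda>t::real. p + t *\<^sub>R axis i 1) -` U)"
    by (rule continuous_open_vimage[OF assms(1)]) (intro continuous_intros)
  moreover have "(0::real) \<in> (\<lambda>t::real. p + t *\<^sub>R axis i 1) -` U" using assms(2) by simp
  ultimately have "eventually (\<lambda>t. t \<in> (\<lambda>t::real. p + t *\<^sub>R axis i 1) -` U) (nhds 0)"
    by (rule eventually_nhds_in_open)
  then have "eventually (\<lambda>t. p + t *\<^sub>R axis i 1 \<in> U) (nhds 0)" by simp
  then show "eventually (\<lambda>t. f (p + t *\<^sub>R axis i 1) = h (p + t *\<^sub>R axis i 1)) (nhds 0)"
    by (rule eventually_mono) (simp add: assms(3))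
qed

lemma partial_const:
  fixes f :: "real^'m::finite \<Rightarrow> real"
  assumes "open U" "p \<in> U" "\<And>q. q \<in> U \<Longrightarrow> f q = c"
  shows "partial i f p = 0"
proof -
  have "partial i f p = partial i (\<lambda>q. c) p" by (rule partial_local[OF assms])
  also have "\<dots> = 0" unfolding partial_def by simp
  finally show ?thesis .
qed



lemma compat_half:
  fixes G Gi :: "'m::finite \<Rightarrow> 'm \<Rightarrow> real" and dg \<Gamma> :: "'m \<Rightarrow> 'm \<Rightarrow> 'm \<Rightarrow> real"
  assumes sym: "\<And>j k. G j k = G k j"
    and inv: "\<And>k m. (\<Sum>l\<in>UNIV. G k l * Gi l m) = (if k = m then 1 else 0)"
    and Gam: "\<And>k i j. \<Gamma> k i j = 1/2 * (\<Sum>l\<in>UNIV. Gi k l * (dg i j l + dg j i l - dg l i j))"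
  shows "(\<Sum>l\<in>UNIV. \<Gamma> l i j * G l k) = 1/2 * (dg i j k + dg j i k - dg k i j)"
proof -
  let ?T = "\<lambda>m. dg i j m + dg j i m - dg m i j"
  have "(\<Sum>l\<in>UNIV. \<Gamma> l i j * G l k) = 1/2 * (\<Sum>l\<in>UNIV. \<Sum>m\<in>UNIV. G k l * Gi l m * ?T m)"
    by (simp add: Gam sum_distrib_left sum_distrib_right sym[of _ k] mult_ac)
  also have "\<dots> = 1/2 * (\<Sum>m\<in>UNIV. \<Sum>l\<in>UNIV. G k l * Gi l m * ?T m)"
    by (subst sum.swap) simp
  also have "\<dots> = 1/2 * (\<Sum>m\<in>UNIV. (\<Sum>l\<in>UNIV. G k l * Gi l m) * ?T m)"
    by (simp add: sum_distrib_right)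
  also have "\<dots> = 1/2 * ?T k"
  proof -
    have "\<And>m. (if k = m then 1 else 0) * ?T m = (if k = m then ?T m else 0)" by simp
    then show ?thesis by (simp only: inv) simp
  qed
  finally show ?thesis .
qed

lemma compat_alg:
  fixes G Gi :: "'m::finite \<Rightarrow> 'm \<Rightarrow> real" and dg \<Gamma> :: "'m \<Rightarrow> 'm \<Rightarrow> 'm \<Rightarrow> real"
  assumes sym: "\<And>j k. G j k = G k j"
    and inv: "\<And>k m. (\<Sum>l\<in>UNIV. G k l * Gi l m) = (if k = m then 1 else 0)"
    and Gam: "\<And>k i j. \<Gamma> k i j = 1/2 * (\<Sum>l\<in>UNIV. Gi k l * (dg i j l + dg j i l - dg l i j))"
    and dsym: "\<And>i j k. dg i j k = dg i k j"
  shows "dg i j k = (\<Sum>l\<in>UNIV. \<Gamma> l i j * G l k) + (\<Sum>l\<in>UNIV. \<Gamma> l i k * G j l)"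
proof -
  have "(\<Sum>l\<in>UNIV. \<Gamma> l i k * G j l) = (\<Sum>l\<in>UNIV. \<Gamma> l i k * G l j)" by (simp add: sym[of j])
  then show ?thesis
    using compat_half[OF sym inv Gam, of i j k] compat_half[OF sym inv Gam, of i k j] dsym[of i k j]
    by simp
qed

lemma nabla_gphi_alg:
  fixes G P :: "'m::finite \<Rightarrow> 'm \<Rightarrow> real" and dg \<Gamma> dP N :: "'m \<Rightarrow> 'm \<Rightarrow> 'm \<Rightarrow> real"
  assumes comp: "\<And>i j k. dg i j k = (\<Sum>l\<in>UNIV. \<Gamma> l i j * G l k) + (\<Sum>l\<in>UNIV. \<Gamma> l i k * G j l)"
    and Ndef: "\<And>i l k. N i l k = dP i l k + (\<Sum>m\<in>UNIV. \<Gamma> l i m * P m k) - (\<Sum>m\<in>UNIV. \<Gamma> m i k * P l m)"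
  shows "(\<Sum>l\<in>UNIV. dg i j l * P l k + G j l * dP i l k)
      - (\<Sum>l\<in>UNIV. \<Gamma> l i j * (\<Sum>m\<in>UNIV. G l m * P m k))
      - (\<Sum>l\<in>UNIV. \<Gamma> l i k * (\<Sum>m\<in>UNIV. G j m * P m l))
     = (\<Sum>l\<in>UNIV. G j l * N i l k)"
proof -
  have dP: "\<And>i l k. dP i l k = N i l k - (\<Sum>m\<in>UNIV. \<Gamma> l i m * P m k) + (\<Sum>m\<in>UNIV. \<Gamma> m i k * P l m)"
    using Ndef by simp
  have c1: "(\<Sum>l\<in>UNIV. (\<Sum>m\<in>UNIV. \<Gamma> m i j * G m l) * P l k) = (\<Sum>l\<in>UNIV. \<Gamma> l i j * (\<Sum>m\<in>UNIV. G l m * P m k))"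
    by (simp add: sum_distrib_left sum_distrib_right mult_ac) (subst sum.swap, simp add: mult_ac)
  have c2: "(\<Sum>l\<in>UNIV. (\<Sum>m\<in>UNIV. \<Gamma> m i l * G j m) * P l k) = (\<Sum>l\<in>UNIV. G j l * (\<Sum>m\<in>UNIV. \<Gamma> l i m * P m k))"
    by (simp add: sum_distrib_left sum_distrib_right mult_ac) (subst sum.swap, simp add: mult_ac)
  have c3: "(\<Sum>l\<in>UNIV. G j l * (\<Sum>m\<in>UNIV. \<Gamma> m i k * P l m)) = (\<Sum>l\<in>UNIV. \<Gamma> l i k * (\<Sum>m\<in>UNIV. G j m * P m l))"
    by (simp add: sum_distrib_left sum_distrib_right mult_ac) (subst sum.swap, simp add: mult_ac)
  have e: "(\<Sum>l\<in>UNIV. dg i j l * P l k + G j l * dP i l k) =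
     (\<Sum>l\<in>UNIV. (\<Sum>m\<in>UNIV. \<Gamma> m i j * G m l) * P l k) + (\<Sum>l\<in>UNIV. (\<Sum>m\<in>UNIV. \<Gamma> m i l * G j m) * P l k)
     + (\<Sum>l\<in>UNIV. G j l * N i l k) - (\<Sum>l\<in>UNIV. G j l * (\<Sum>m\<in>UNIV. \<Gamma> l i m * P m k))
     + (\<Sum>l\<in>UNIV. G j l * (\<Sum>m\<in>UNIV. \<Gamma> m i k * P l m))"
    by (simp add: comp[of i j] dP algebra_simps sum.distrib sum_subtractf)
  show ?thesis using e c1 c2 c3 by simp
qed

lemma E_alg:
  fixes G :: "'m::finite \<Rightarrow> 'm \<Rightarrow> real" and H X :: "'m \<Rightarrow> real" and dH dX :: "'m \<Rightarrow> 'm \<Rightarrow> real"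
    and dg \<Gamma> :: "'m \<Rightarrow> 'm \<Rightarrow> 'm \<Rightarrow> real"
  assumes comp: "\<And>i j k. dg i j k = (\<Sum>l\<in>UNIV. \<Gamma> l i j * G l k) + (\<Sum>l\<in>UNIV. \<Gamma> l i k * G j l)"
    and HX: "\<And>j. H j = (\<Sum>l\<in>UNIV. G j l * X l)"
    and sym: "\<And>j k. G j k = G k j"
    and dH: "\<And>i j. dH i j = (\<Sum>l\<in>UNIV. dg i j l * X l + G j l * dX i l)"
  shows "dH i j - (\<Sum>l\<in>UNIV. \<Gamma> l i j * H l) = (\<Sum>l\<in>UNIV. G j l * (dX i l + (\<Sum>m\<in>UNIV. \<Gamma> l i m * X m)))"
proof -
  have c1: "(\<Sum>l\<in>UNIV. (\<Sum>m\<in>UNIV. \<Gamma> m i j * G m l) * X l) = (\<Sum>l\<in>UNIV. \<Gamma> l i j * H l)"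
    by (simp add: HX sum_distrib_left sum_distrib_right mult_ac) (subst sum.swap, simp add: mult_ac)
  have c2: "(\<Sum>l\<in>UNIV. (\<Sum>m\<in>UNIV. \<Gamma> m i l * G j m) * X l) = (\<Sum>l\<in>UNIV. G j l * (\<Sum>m\<in>UNIV. \<Gamma> l i m * X m))"
    by (simp add: sum_distrib_left sum_distrib_right mult_ac) (subst sum.swap, simp add: mult_ac)
  have "dH i j = (\<Sum>l\<in>UNIV. (\<Sum>m\<in>UNIV. \<Gamma> m i j * G m l) * X l) + (\<Sum>l\<in>UNIV. (\<Sum>m\<in>UNIV. \<Gamma> m i l * G j m) * X l)
      + (\<Sum>l\<in>UNIV. G j l * dX i l)"
    by (simp add: dH comp[of i j] algebra_simps sum.distrib)
  then show ?thesis using c1 c2 by (simp add: algebra_simps sum.distrib)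
qed

lemma D_alg:
  fixes P :: "'m::finite \<Rightarrow> 'm \<Rightarrow> real" and X :: "'m \<Rightarrow> real" and dX :: "'m \<Rightarrow> 'm \<Rightarrow> real"
    and dP N \<Gamma> :: "'m \<Rightarrow> 'm \<Rightarrow> 'm \<Rightarrow> real"
  assumes Ndef: "\<And>i l k. N i l k = dP i l k + (\<Sum>m\<in>UNIV. \<Gamma> l i m * P m k) - (\<Sum>m\<in>UNIV. \<Gamma> m i k * P l m)"
    and PX: "\<And>s. (\<Sum>m\<in>UNIV. P s m * X m) = 0"
    and d: "(\<Sum>m\<in>UNIV. dP i l m * X m + P l m * dX i m) = 0"
  shows "(\<Sum>m\<in>UNIV. N i l m * X m) + (\<Sum>s\<in>UNIV. P l s * (dX i s + (\<Sum>m\<in>UNIV. \<Gamma> s i m * X m))) = 0"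
proof -
  have dP: "\<And>i l k. dP i l k = N i l k - (\<Sum>m\<in>UNIV. \<Gamma> l i m * P m k) + (\<Sum>m\<in>UNIV. \<Gamma> m i k * P l m)"
    using Ndef by simp
  have c0: "(\<Sum>m\<in>UNIV. (\<Sum>s\<in>UNIV. \<Gamma> l i s * P s m) * X m) = 0"
  proof -
    have "(\<Sum>m\<in>UNIV. (\<Sum>s\<in>UNIV. \<Gamma> l i s * P s m) * X m) = (\<Sum>s\<in>UNIV. \<Gamma> l i s * (\<Sum>m\<in>UNIV. P s m * X m))"
      by (simp add: sum_distrib_left sum_distrib_right mult_ac) (subst sum.swap, simp add: mult_ac)
    then show ?thesis by (simp add: PX)
  qed
  have c1: "(\<Sum>m\<in>UNIV. (\<Sum>s\<in>UNIV. \<Gamma> s i m * P l s) * X m) = (\<Sum>s\<in>UNIV. P l s * (\<Sum>m\<in>UNIV. \<Gamma> s i m * X m))"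
    by (simp add: sum_distrib_left sum_distrib_right mult_ac) (subst sum.swap, simp add: mult_ac)
  have "(\<Sum>m\<in>UNIV. dP i l m * X m + P l m * dX i m) = (\<Sum>m\<in>UNIV. N i l m * X m)
     - (\<Sum>m\<in>UNIV. (\<Sum>s\<in>UNIV. \<Gamma> l i s * P s m) * X m) + (\<Sum>m\<in>UNIV. (\<Sum>s\<in>UNIV. \<Gamma> s i m * P l s) * X m)
     + (\<Sum>m\<in>UNIV. P l m * dX i m)"
    by (simp add: dP algebra_simps sum.distrib sum_subtractf)
  then show ?thesis using d c0 c1 by (simp add: algebra_simps sum.distrib)
qed

lemma HD_alg:
  fixes H X :: "'m::finite \<Rightarrow> real" and dH dX :: "'m \<Rightarrow> 'm \<Rightarrow> real" and \<Gamma> :: "'m \<Rightarrow> 'm \<Rightarrow> 'm \<Rightarrow> real"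
  assumes d: "(\<Sum>s\<in>UNIV. dH i s * X s + H s * dX i s) = 0"
  shows "(\<Sum>s\<in>UNIV. (dH i s - (\<Sum>l\<in>UNIV. \<Gamma> l i s * H l)) * X s)
       + (\<Sum>s\<in>UNIV. H s * (dX i s + (\<Sum>m\<in>UNIV. \<Gamma> s i m * X m))) = 0"
proof -
  have c: "(\<Sum>s\<in>UNIV. (\<Sum>l\<in>UNIV. \<Gamma> l i s * H l) * X s) = (\<Sum>s\<in>UNIV. H s * (\<Sum>m\<in>UNIV. \<Gamma> s i m * X m))"
    by (simp add: sum_distrib_left sum_distrib_right mult_ac) (subst sum.swap, simp add: mult_ac)
  show ?thesis using d c by (simp add: algebra_simps sum.distrib sum_subtractf)
qed

lemma bilin_zero:
  fixes H Y Z \<alpha> \<beta> :: "'m::finite \<Rightarrow> real"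
  assumes "(\<Sum>j\<in>UNIV. H j * Y j) = 0" "(\<Sum>k\<in>UNIV. H k * Z k) = 0"
  shows "(\<Sum>j\<in>UNIV. \<Sum>k\<in>UNIV. c * (H j * \<alpha> k + H k * \<beta> j) * Y j * Z k) = 0"
proof -
  have "(\<Sum>j\<in>UNIV. \<Sum>k\<in>UNIV. c * (H j * \<alpha> k + H k * \<beta> j) * Y j * Z k)
     = (\<Sum>j\<in>UNIV. \<Sum>k\<in>UNIV. c * ((H j * Y j) * (\<alpha> k * Z k))) + (\<Sum>j\<in>UNIV. \<Sum>k\<in>UNIV. c * ((\<beta> j * Y j) * (H k * Z k)))"
    by (simp add: sum.distrib algebra_simps)
  also have "\<dots> = c * ((\<Sum>j\<in>UNIV. H j * Y j) * (\<Sum>k\<in>UNIV. \<alpha> k * Z k)) + c * ((\<Sum>j\<in>UNIV. \<beta> j * Y j) * (\<Sum>k\<in>UNIV. H k * Z k))"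
    by (simp only: sum_product) (simp only: sum_distrib_left)
  finally show ?thesis using assms by simp
qed



lemma sig_invertible:
  fixes G :: "real^'m::finite^'m"
  assumes "has_signature G p q"
  shows "invertible G"
proof -
  obtain e :: "'m \<Rightarrow> real^'m" where orth: "\<forall>a b. a \<noteq> b \<longrightarrow> bil G (e a) (e b) = 0"
    and dg: "\<forall>a. bil G (e a) (e a) = 1 \<or> bil G (e a) (e a) = -1"
    using assms unfolding has_signature_def by (elim exE conjE) (rule that, assumption+)
  define M :: "real^'m^'m" where "M = (\<chi> a. e a)"
  have eq: "M ** (G ** transpose M) = (\<chi> a b. bil G (e a) (e b))"
    by (simp add: M_def vec_eq_iff matrix_matrix_mult_def transpose_def bil_def inner_vec_def
        matrix_vector_mult_def)
  have "det ((\<chi> a b. bil G (e a) (e b)) :: real^'m^'m) = (\<Prod>a\<in>UNIV. bil G (e a) (e a))"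
    by (rule trans[OF det_diagonal]) (use orth in auto)
  also have "\<dots> \<noteq> 0"
  proof -
    have "\<forall>a\<in>UNIV. bil G (e a) (e a) \<noteq> 0" using dg by (metis one_neq_zero zero_neq_neg_one)
    then show ?thesis by (simp add: prod_zero_iff)
  qed
  finally have "det (M ** (G ** transpose M)) \<noteq> 0" by (simp add: eq)
  then have "det G \<noteq> 0" by (simp add: det_mul)
  then show ?thesis by (simp add: invertible_det_nz)
qed

lemma inv_right:
  fixes G :: "real^'m::finite^'m"
  assumes "invertible G"
  shows "G ** matrix_inv G = mat 1"
proof -
  have "\<exists>A'. G ** A' = mat 1 \<and> A' ** G = mat 1" using assms by (simp add: invertible_def)
  then show ?thesis unfolding matrix_inv_def by (metis (mono_tags, lifting) someI_ex)
qed



lemma smooth_diff_at: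
  fixes f :: "real^'m::finite \<Rightarrow> real"
  assumes "smooth_on U f" "open U" "p \<in> U"
  shows "f differentiable at p"
proof -
  have "iter_partial [] f differentiable_on U" using assms(1) unfolding smooth_on_def by blast
  then show ?thesis using assms(2,3) by (simp add: differentiable_on_eq_differentiable_at)
qed

lemma partial_constfun [simp]: "partial i (\<lambda>q. c) p = 0"
  unfolding partial_def by simp

lemma sum_delta_mult':
  fixes f :: "'a::finite \<Rightarrow> real"
  shows "(\<Sum>l\<in>UNIV. f l * (if i = l then 1 else 0)) = f i"
proof -
  have "(\<Sum>l\<in>UNIV. f l * (if i = l then 1 else 0)) = (\<Sum>l\<in>UNIV. if i = l then f l else 0)"
    by (rule sum.cong) auto
  also have "\<dots> = f i" by (simp add: sum.delta')
  finally show ?thesis .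
qed

lemma sum_delta_mult:
  fixes f :: "'a::finite \<Rightarrow> real"
  shows "(\<Sum>l\<in>UNIV. f l * (if l = i then 1 else 0)) = f i"
proof -
  have "(\<Sum>l\<in>UNIV. f l * (if l = i then 1 else 0)) = (\<Sum>l\<in>UNIV. if l = i then f l else 0)"
    by (rule sum.cong) auto
  also have "\<dots> = f i" by (simp add: sum.delta)
  finally show ?thesis .
qed

theorem mainTheorem2:
  fixes U :: "(real^'m::finite) set" and n :: nat
    and phi g :: "real^'m \<Rightarrow> real^'m^'m" and xi eta :: "real^'m \<Rightarrow> real^'m"
  assumes "almost_contact_B_metric U n phi xi eta g"
    and "sasaki_like U phi xi eta g"
    and "einstein_like U phi eta g"
    and "ricci_like_soliton U phi eta g xi"
  shows "\<forall>p\<in>U.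
           (\<forall>x y z :: real^'m. (\<Sum>i\<in>UNIV. \<Sum>j\<in>UNIV. \<Sum>k\<in>UNIV.
               x $ i * nabla_ricci g p i j k * (phi p *v y) $ j * (phi p *v z) $ k) = 0)
         \<and> (\<forall>j k. (\<Sum>i\<in>UNIV. xi p $ i * nabla_ricci g p i j k) = 0)"
proof (intro ballI)
  fix p assume pU: "p \<in> U"
  note acB = assms(1)[unfolded almost_contact_B_metric_def]
  have opU: "open U" using acB by blast
  have sphi: "\<And>i j. smooth_on U (\<lambda>q. phi q $ i $ j)" using acB by blast
  have sxi: "\<And>i. smooth_on U (\<lambda>q. xi q $ i)" using acB by blast
  have seta: "\<And>i. smooth_on U (\<lambda>q. eta q $ i)" using acB by blast
  have sg: "\<And>i j. smooth_on U (\<lambda>q. g q $ i $ j)" using acB by blast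
  have pt: "\<And>q. q \<in> U \<Longrightarrow> transpose (g q) = g q \<and> has_signature (g q) (n + 1) n \<and>
        phi q *v xi q = 0 \<and>
        (\<forall>x. phi q *v (phi q *v x) = - x + (eta q \<bullet> x) *\<^sub>R xi q) \<and>
        (\<forall>x. eta q \<bullet> (phi q *v x) = 0) \<and>
        eta q \<bullet> xi q = 1 \<and>
        (\<forall>x y. bil (g q) (phi q *v x) (phi q *v y) = - bil (g q) x y + (eta q \<bullet> x) * (eta q \<bullet> y))"
    using acB by blast
  have dfphi[simp]: "\<And>i j. (\<lambda>q. phi q $ i $ j) differentiable at p" using smooth_diff_at[OF sphi opU pU] .
  have dfxi[simp]: "\<And>i. (\<lambda>q. xi q $ i) differentiable at p" using smooth_diff_at[OF sxi opU pU] .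
  have dfeta[simp]: "\<And>i. (\<lambda>q. eta q $ i) differentiable at p" using smooth_diff_at[OF seta opU pU] .
  have dfg[simp]: "\<And>i j. (\<lambda>q. g q $ i $ j) differentiable at p" using smooth_diff_at[OF sg opU pU] .

  have symq: "\<And>q j k. q \<in> U \<Longrightarrow> g q $ j $ k = g q $ k $ j"
  proof -
    fix q j k assume "q \<in> U"
    then have "transpose (g q) = g q" using pt by blast
    then have "transpose (g q) $ k $ j = g q $ k $ j" by simp
    then show "g q $ j $ k = g q $ k $ j" by (simp add: transpose_def)
  qed
  have HXq: "\<And>q j. q \<in> U \<Longrightarrow> eta q $ j = (\<Sum>l\<in>UNIV. g q $ j $ l * xi q $ l)"
  proof -
    fix q j assume qU: "q \<in> U"
    have "bil (g q) (phi q *v axis j 1) (phi q *v xi q) = - bil (g q) (axis j 1) (xi q) + (eta q \<bullet> axis j 1) * (eta q \<bullet> xi q)"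
      using pt[OF qU] by blast
    moreover have "phi q *v xi q = 0" "eta q \<bullet> xi q = 1" using pt[OF qU] by auto
    ultimately have "bil (g q) (axis j 1) (xi q) = eta q \<bullet> axis j 1" by (simp add: bil_def)
    then show "eta q $ j = (\<Sum>l\<in>UNIV. g q $ j $ l * xi q $ l)"
      by (simp add: bil_def inner_axis' inner_axis matrix_vector_mult_def)
  qed
  have PXq: "\<And>q s. q \<in> U \<Longrightarrow> (\<Sum>m\<in>UNIV. phi q $ s $ m * xi q $ m) = 0"
  proof -
    fix q s assume qU: "q \<in> U"
    have "phi q *v xi q = 0" using pt[OF qU] by blast
    then have "(phi q *v xi q) $ s = 0" by simp
    then show "(\<Sum>m\<in>UNIV. phi q $ s $ m * xi q $ m) = 0" by (simp add: matrix_vector_mult_def)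
  qed
  have HX1q: "\<And>q. q \<in> U \<Longrightarrow> (\<Sum>s\<in>UNIV. eta q $ s * xi q $ s) = 1"
    using pt by (simp add: inner_vec_def)

  define G where "G = (\<lambda>j k. g p $ j $ k)"
  define P where "P = (\<lambda>j k. phi p $ j $ k)"
  define X where "X = (\<lambda>j. xi p $ j)"
  define H where "H = (\<lambda>j. eta p $ j)"
  define Gi where "Gi = (\<lambda>j k. matrix_inv (g p) $ j $ k)"
  define \<Gamma> where "\<Gamma> = (\<lambda>k i j. christoffel g p k i j)"
  define dg where "dg = (\<lambda>i j k. partial i (\<lambda>q. g q $ j $ k) p)"
  define dP where "dP = (\<lambda>i j k. partial i (\<lambda>q. phi q $ j $ k) p)"
  define dX where "dX = (\<lambda>i j. partial i (\<lambda>q. xi q $ j) p)"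
  define dH where "dH = (\<lambda>i j. partial i (\<lambda>q. eta q $ j) p)"
  define N where "N = (\<lambda>i l k. nabla_phi g phi p i l k)"

  have sym: "\<And>j k. G j k = G k j" using symq[OF pU] by (simp add: G_def)
  have inv: "\<And>k m. (\<Sum>l\<in>UNIV. G k l * Gi l m) = (if k = m then 1 else 0)"
  proof -
    fix k m
    have "invertible (g p)" using pt[OF pU] sig_invertible by blast
    then have "g p ** matrix_inv (g p) = mat 1" by (rule inv_right)
    then have "(g p ** matrix_inv (g p)) $ k $ m = mat 1 $ k $ m" by simp
    then show "(\<Sum>l\<in>UNIV. G k l * Gi l m) = (if k = m then 1 else 0)"
      by (simp add: G_def Gi_def matrix_matrix_mult_def mat_def)
  qed
  have Gam: "\<And>k i j. \<Gamma> k i j = 1/2 * (\<Sum>l\<in>UNIV. Gi k l * (dg i j l + dg j i l - dg l i j))"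
    by (simp add: \<Gamma>_def Gi_def dg_def christoffel_def)
  have dsym: "\<And>i j k. dg i j k = dg i k j"
    unfolding dg_def by (rule partial_local[OF opU pU]) (rule symq)
  have comp: "\<And>i j k. dg i j k = (\<Sum>l\<in>UNIV. \<Gamma> l i j * G l k) + (\<Sum>l\<in>UNIV. \<Gamma> l i k * G j l)"
    by (rule compat_alg[OF sym inv Gam dsym])
  have Ndef: "\<And>i l k. N i l k = dP i l k + (\<Sum>m\<in>UNIV. \<Gamma> l i m * P m k) - (\<Sum>m\<in>UNIV. \<Gamma> m i k * P l m)"
    by (simp add: N_def dP_def \<Gamma>_def P_def nabla_phi_def)
  have sas: "\<And>i l k. N i l k = - G i k * X l - H k * (if l = i then 1 else 0) + 2 * H i * H k * X l"
    using assms(2) pU by (simp add: sasaki_like_def N_def G_def X_def H_def)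
  have HX: "\<And>j. H j = (\<Sum>l\<in>UNIV. G j l * X l)" using HXq[OF pU] by (simp add: H_def G_def X_def)
  have PX: "\<And>s. (\<Sum>m\<in>UNIV. P s m * X m) = 0" using PXq[OF pU] by (simp add: P_def X_def)
  have HX1: "(\<Sum>s\<in>UNIV. H s * X s) = 1" using HX1q[OF pU] by (simp add: H_def X_def)
  have XG: "\<And>k. (\<Sum>i\<in>UNIV. X i * G i k) = H k"
  proof -
    fix k
    have e: "(\<lambda>i. X i * G i k) = (\<lambda>i. G k i * X i)"
    proof
      fix i show "X i * G i k = G k i * X i" by (simp add: sym[of i k])
    qed
    show "(\<Sum>i\<in>UNIV. X i * G i k) = H k" by (simp only: e HX)
  qed

  have dHeq: "\<And>i j. dH i j = (\<Sum>l\<in>UNIV. dg i j l * X l + G j l * dX i l)"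
  proof -
    fix i j
    have "dH i j = partial i (\<lambda>q. \<Sum>l\<in>UNIV. g q $ j $ l * xi q $ l) p"
      unfolding dH_def by (rule partial_local[OF opU pU]) (rule HXq)
    also have "\<dots> = (\<Sum>l\<in>UNIV. dg i j l * X l + G j l * dX i l)"
      by (simp add: partial_sum partial_mult dg_def X_def G_def dX_def)
    finally show "dH i j = (\<Sum>l\<in>UNIV. dg i j l * X l + G j l * dX i l)" .
  qed
  have dPX: "\<And>i l. (\<Sum>m\<in>UNIV. dP i l m * X m + P l m * dX i m) = 0"
  proof -
    fix i l
    have "partial i (\<lambda>q. \<Sum>m\<in>UNIV. phi q $ l $ m * xi q $ m) p = 0"
      by (rule partial_const[OF opU pU]) (rule PXq)
    then show "(\<Sum>m\<in>UNIV. dP i l m * X m + P l m * dX i m) = 0"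
      by (simp add: partial_sum partial_mult dP_def X_def P_def dX_def)
  qed
  have dHX: "\<And>i. (\<Sum>s\<in>UNIV. dH i s * X s + H s * dX i s) = 0"
  proof -
    fix i
    have "partial i (\<lambda>q. \<Sum>s\<in>UNIV. eta q $ s * xi q $ s) p = 0"
      by (rule partial_const[OF opU pU]) (rule HX1q)
    then show "(\<Sum>s\<in>UNIV. dH i s * X s + H s * dX i s) = 0"
      by (simp add: partial_sum partial_mult dH_def X_def H_def dX_def)
  qed

  obtain a b c where ein: "\<forall>q\<in>U. \<forall>i j. ricci g q i j = a * g q $ i $ j + b * gtilde g phi eta q i j + c * eta q $ i * eta q $ j"
    using assms(3) unfolding einstein_like_def by blast
  have ricp: "\<And>j k. ricci g p j k = a * G j k + b * ((\<Sum>l\<in>UNIV. G j l * P l k) + H j * H k) + c * H j * H k"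
    using ein pU by (simp add: gtilde_def G_def P_def H_def)
  have dric: "\<And>i j k. partial i (\<lambda>q. ricci g q j k) p =
      a * dg i j k + b * ((\<Sum>l\<in>UNIV. dg i j l * P l k + G j l * dP i l k) + (dH i j * H k + H j * dH i k))
      + c * (dH i j * H k + H j * dH i k)"
  proof -
    fix i j k
    have "partial i (\<lambda>q. ricci g q j k) p = partial i (\<lambda>q. a * g q $ j $ k
        + b * ((\<Sum>l\<in>UNIV. g q $ j $ l * phi q $ l $ k) + eta q $ j * eta q $ k) + c * (eta q $ j * eta q $ k)) p"
      by (rule partial_local[OF opU pU]) (use ein in \<open>simp add: gtilde_def mult.assoc\<close>)
    also have "\<dots> = a * dg i j k + b * ((\<Sum>l\<in>UNIV. dg i j l * P l k + G j l * dP i l k) + (dH i j * H k + H j * dH i k))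
      + c * (dH i j * H k + H j * dH i k)"
      by (simp add: partial_sum partial_mult partial_add partial_cmult dg_def dP_def dH_def G_def P_def H_def)
    finally show "partial i (\<lambda>q. ricci g q j k) p = a * dg i j k + b * ((\<Sum>l\<in>UNIV. dg i j l * P l k + G j l * dP i l k) + (dH i j * H k + H j * dH i k))
      + c * (dH i j * H k + H j * dH i k)" .
  qed

  define E where "E = (\<lambda>i j. dH i j - (\<Sum>l\<in>UNIV. \<Gamma> l i j * H l))"
  define D where "D = (\<lambda>i s. dX i s + (\<Sum>m\<in>UNIV. \<Gamma> s i m * X m))"
  have Eeq: "\<And>i j. E i j = (\<Sum>l\<in>UNIV. G j l * D i l)"
    unfolding E_def D_def by (rule E_alg[OF comp HX sym dHeq])
  have Lb: "\<And>i j k. (\<Sum>l\<in>UNIV. dg i j l * P l k + G j l * dP i l k)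
      - (\<Sum>l\<in>UNIV. \<Gamma> l i j * (\<Sum>m\<in>UNIV. G l m * P m k))
      - (\<Sum>l\<in>UNIV. \<Gamma> l i k * (\<Sum>m\<in>UNIV. G j m * P m l)) = (\<Sum>l\<in>UNIV. G j l * N i l k)"
    by (rule nabla_gphi_alg[OF comp Ndef])
  have Aeq: "\<And>i j k. nabla_ricci g p i j k = b * (\<Sum>l\<in>UNIV. G j l * N i l k) + (b+c) * (E i j * H k + H j * E i k)"
  proof -
    fix i j k
    have r1: "(\<Sum>l\<in>UNIV. \<Gamma> l i j * ricci g p l k) = a * (\<Sum>l\<in>UNIV. \<Gamma> l i j * G l k)
       + b * (\<Sum>l\<in>UNIV. \<Gamma> l i j * (\<Sum>m\<in>UNIV. G l m * P m k)) + (b+c) * ((\<Sum>l\<in>UNIV. \<Gamma> l i j * H l) * H k)"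
      by (simp add: ricp algebra_simps sum.distrib sum_distrib_left sum_distrib_right)
    have r2: "(\<Sum>l\<in>UNIV. \<Gamma> l i k * ricci g p j l) = a * (\<Sum>l\<in>UNIV. \<Gamma> l i k * G j l)
       + b * (\<Sum>l\<in>UNIV. \<Gamma> l i k * (\<Sum>m\<in>UNIV. G j m * P m l)) + (b+c) * (H j * (\<Sum>l\<in>UNIV. \<Gamma> l i k * H l))"
      by (simp add: ricp algebra_simps sum.distrib sum_distrib_left sum_distrib_right)
    have "nabla_ricci g p i j k = partial i (\<lambda>q. ricci g q j k) p
        - (\<Sum>l\<in>UNIV. \<Gamma> l i j * ricci g p l k) - (\<Sum>l\<in>UNIV. \<Gamma> l i k * ricci g p j l)"
      by (simp add: nabla_ricci_def \<Gamma>_def)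
    also have "\<dots> = a * (dg i j k - (\<Sum>l\<in>UNIV. \<Gamma> l i j * G l k) - (\<Sum>l\<in>UNIV. \<Gamma> l i k * G j l))
        + b * ((\<Sum>l\<in>UNIV. dg i j l * P l k + G j l * dP i l k)
              - (\<Sum>l\<in>UNIV. \<Gamma> l i j * (\<Sum>m\<in>UNIV. G l m * P m k))
              - (\<Sum>l\<in>UNIV. \<Gamma> l i k * (\<Sum>m\<in>UNIV. G j m * P m l)))
        + (b+c) * (E i j * H k + H j * E i k)"
      unfolding dric r1 r2 E_def by (simp add: algebra_simps)
    also have "\<dots> = b * (\<Sum>l\<in>UNIV. G j l * N i l k) + (b+c) * (E i j * H k + H j * E i k)"
      unfolding Lb using comp[of i j k] by simp
    finally show "nabla_ricci g p i j k = b * (\<Sum>l\<in>UNIV. G j l * N i l k) + (b+c) * (E i j * H k + H j * E i k)" .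
  qed
  have GN: "\<And>i j k. (\<Sum>l\<in>UNIV. G j l * N i l k) = - G i k * H j - H k * G j i + 2 * H i * H k * H j"
  proof -
    fix i j k
    have pw: "\<And>l. G j l * N i l k = (- G i k) * (G j l * X l) + (- H k) * (G j l * (if l = i then 1 else 0))
         + (2 * H i * H k) * (G j l * X l)"
      by (simp add: sas algebra_simps)
    have "(\<Sum>l\<in>UNIV. G j l * N i l k) = (- G i k) * (\<Sum>l\<in>UNIV. G j l * X l) + (- H k) * (\<Sum>l\<in>UNIV. G j l * (if l = i then 1 else 0))
         + (2 * H i * H k) * (\<Sum>l\<in>UNIV. G j l * X l)"
      by (simp only: pw sum.distrib sum_distrib_left)
    then show "(\<Sum>l\<in>UNIV. G j l * N i l k) = - G i k * H j - H k * G j i + 2 * H i * H k * H j"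
      by (simp only: HX[symmetric] sum_delta_mult; simp add: algebra_simps)
  qed
  have HD0: "\<And>i. (\<Sum>s\<in>UNIV. H s * D i s) = 0"
  proof -
    fix i
    have h: "(\<Sum>s\<in>UNIV. E i s * X s) + (\<Sum>s\<in>UNIV. H s * D i s) = 0"
      using HD_alg[where \<Gamma>=\<Gamma> and i=i and dH=dH and dX=dX and H=H and X=X, OF dHX[of i]] unfolding E_def D_def .
    have "(\<Sum>s\<in>UNIV. E i s * X s) = (\<Sum>l\<in>UNIV. (\<Sum>s\<in>UNIV. X s * G s l) * D i l)"
      by (simp add: Eeq sum_distrib_right sum_distrib_left mult_ac) (subst sum.swap, simp add: mult_ac)
    also have "\<dots> = (\<Sum>s\<in>UNIV. H s * D i s)" by (simp add: XG)
    finally show "(\<Sum>s\<in>UNIV. H s * D i s) = 0" using h by simp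
  qed
  define V where "V = (\<lambda>s. \<Sum>i\<in>UNIV. X i * D i s)"
  have NX: "\<And>i l. (\<Sum>m\<in>UNIV. N i l m * X m) = H i * X l - (if l = i then 1 else 0)"
  proof -
    fix i l
    have pw: "\<And>m. N i l m * X m = (- X l) * (G i m * X m) + (- (if l = i then 1 else 0)) * (H m * X m)
        + (2 * H i * X l) * (H m * X m)"
      by (simp add: sas algebra_simps)
    have "(\<Sum>m\<in>UNIV. N i l m * X m) = (- X l) * (\<Sum>m\<in>UNIV. G i m * X m) + (- (if l = i then 1 else 0)) * (\<Sum>m\<in>UNIV. H m * X m)
        + (2 * H i * X l) * (\<Sum>m\<in>UNIV. H m * X m)"
      by (simp only: pw sum.distrib sum_distrib_left)
    then show "(\<Sum>m\<in>UNIV. N i l m * X m) = H i * X l - (if l = i then 1 else 0)"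
      by (simp only: HX[symmetric] HX1; simp add: algebra_simps)
  qed
  have PV: "\<And>l. (\<Sum>s\<in>UNIV. P l s * V s) = 0"
  proof -
    fix l
    have d: "\<And>i. (\<Sum>m\<in>UNIV. N i l m * X m) + (\<Sum>s\<in>UNIV. P l s * D i s) = 0"
      using D_alg[OF Ndef PX dPX] unfolding D_def .
    have "(\<Sum>i\<in>UNIV. X i * ((\<Sum>m\<in>UNIV. N i l m * X m) + (\<Sum>s\<in>UNIV. P l s * D i s))) = 0"
      by (simp add: d)
    moreover have "(\<Sum>i\<in>UNIV. X i * (\<Sum>m\<in>UNIV. N i l m * X m)) = 0"
    proof -
      have "(\<Sum>i\<in>UNIV. X i * (\<Sum>m\<in>UNIV. N i l m * X m)) = X l * (\<Sum>i\<in>UNIV. H i * X i) - (\<Sum>i\<in>UNIV. X i * (if l = i then 1 else 0))"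
      proof -
        have pw: "\<And>i. X i * (\<Sum>m\<in>UNIV. N i l m * X m) = X l * (H i * X i) - X i * (if l = i then 1 else 0)"
          by (simp only: NX; simp add: algebra_simps)
        show ?thesis by (simp only: pw, simp only: sum_subtractf sum_distrib_left)
      qed
      then show ?thesis by (simp only: HX1 sum_delta_mult'; simp)
    qed
    moreover have "(\<Sum>i\<in>UNIV. X i * (\<Sum>s\<in>UNIV. P l s * D i s)) = (\<Sum>s\<in>UNIV. P l s * V s)"
      by (simp add: V_def sum_distrib_left mult_ac) (subst sum.swap, simp add: mult_ac)
    ultimately show "(\<Sum>s\<in>UNIV. P l s * V s) = 0"
      by (simp add: distrib_left sum.distrib)
  qed
  have HV: "(\<Sum>s\<in>UNIV. H s * V s) = 0"
  proof -
    have "(\<Sum>s\<in>UNIV. H s * V s) = (\<Sum>i\<in>UNIV. X i * (\<Sum>s\<in>UNIV. H s * D i s))"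
      by (simp add: V_def sum_distrib_left mult_ac) (subst sum.swap, simp add: mult_ac)
    then show ?thesis by (simp add: HD0)
  qed
  have V0: "\<And>s. V s = 0"
  proof -
    define v :: "real^'m" where "v = (\<chi> s. V s)"
    have "phi p *v v = 0"
      using PV by (simp add: vec_eq_iff matrix_vector_mult_def v_def P_def)
    moreover have "phi p *v (phi p *v v) = - v + (eta p \<bullet> v) *\<^sub>R xi p" using pt[OF pU] by blast
    moreover have "eta p \<bullet> v = 0" using HV by (simp add: inner_vec_def v_def H_def)
    ultimately have "v = 0" by simp
    then show "\<And>s. V s = 0" by (simp add: v_def vec_eq_iff)
  qed
  have XE: "\<And>j. (\<Sum>i\<in>UNIV. X i * E i j) = 0"
  proof -
    fix j
    have "(\<Sum>i\<in>UNIV. X i * E i j) = (\<Sum>l\<in>UNIV. G j l * V l)"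
      by (simp add: Eeq V_def sum_distrib_left mult_ac) (subst sum.swap, simp add: mult_ac)
    then show "(\<Sum>i\<in>UNIV. X i * E i j) = 0" by (simp add: V0)
  qed
  have Xe: "\<And>i. xi p $ i = X i" by (simp add: X_def)
  have part2: "\<forall>j k. (\<Sum>i\<in>UNIV. xi p $ i * nabla_ricci g p i j k) = 0"
  proof (intro allI)
    fix j k
    have pw: "\<And>i. X i * nabla_ricci g p i j k = (- b * H j) * (X i * G i k) + (- b * H k) * (G j i * X i)
        + (2 * b * H k * H j) * (H i * X i) + ((b+c) * H k) * (X i * E i j) + ((b+c) * H j) * (X i * E i k)"
      by (simp add: Aeq GN algebra_simps)
    have "(\<Sum>i\<in>UNIV. X i * nabla_ricci g p i j k) = (- b * H j) * (\<Sum>i\<in>UNIV. X i * G i k) + (- b * H k) * (\<Sum>i\<in>UNIV. G j i * X i)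
        + (2 * b * H k * H j) * (\<Sum>i\<in>UNIV. H i * X i) + ((b+c) * H k) * (\<Sum>i\<in>UNIV. X i * E i j) + ((b+c) * H j) * (\<Sum>i\<in>UNIV. X i * E i k)"
      by (simp only: pw sum.distrib sum_distrib_left)
    also have "\<dots> = 0" by (simp only: XG HX[symmetric] HX1 XE) (simp add: algebra_simps)
    finally show "(\<Sum>i\<in>UNIV. xi p $ i * nabla_ricci g p i j k) = 0" by (simp only: Xe)
  qed
  have part1: "\<forall>x y z :: real^'m. (\<Sum>i\<in>UNIV. \<Sum>j\<in>UNIV. \<Sum>k\<in>UNIV.
               x $ i * nabla_ricci g p i j k * (phi p *v y) $ j * (phi p *v z) $ k) = 0"
  proof (intro allI)
    fix x y z :: "real^'m"
    have hy: "(\<Sum>j\<in>UNIV. H j * (phi p *v y) $ j) = 0"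
      using pt[OF pU] by (simp add: inner_vec_def H_def)
    have hz: "(\<Sum>j\<in>UNIV. H j * (phi p *v z) $ j) = 0"
      using pt[OF pU] by (simp add: inner_vec_def H_def)
    have Aform: "\<And>i j k. nabla_ricci g p i j k = H j * (b * (- G i k + 2 * H i * H k) + (b+c) * E i k)
        + H k * (- b * G j i + (b+c) * E i j)"
      by (simp add: Aeq GN algebra_simps)
    have "\<And>i. (\<Sum>j\<in>UNIV. \<Sum>k\<in>UNIV. x $ i * nabla_ricci g p i j k * (phi p *v y) $ j * (phi p *v z) $ k) = 0"
      unfolding Aform
      by (rule bilin_zero[OF hy hz, of "x $ i" "\<lambda>k. b * (- G i k + 2 * H i * H k) + (b+c) * E i k"
            "\<lambda>j. - b * G j i + (b+c) * E i j" for i])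
    then show "(\<Sum>i\<in>UNIV. \<Sum>j\<in>UNIV. \<Sum>k\<in>UNIV.
               x $ i * nabla_ricci g p i j k * (phi p *v y) $ j * (phi p *v z) $ k) = 0" by simp
  qed
  show "(\<forall>x y z :: real^'m. (\<Sum>i\<in>UNIV. \<Sum>j\<in>UNIV. \<Sum>k\<in>UNIV.
               x $ i * nabla_ricci g p i j k * (phi p *v y) $ j * (phi p *v z) $ k) = 0)
         \<and> (\<forall>j k. (\<Sum>i\<in>UNIV. xi p $ i * nabla_ricci g p i j k) = 0)"
    using part1 part2 by blast
qed
end
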